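(* Let $f$ be the staircase function with descriptor $(h,o,\delta,\ell,L,V)$, and for $i\in[h]$ let $\Lambda_i$ be the schema partition of $\mathfrak B_\ell$ whose fixed positions are exactly the entries of rows $1,\dots,i$ of $L$ (so $\Lambda_i$ consists of $2^{oi}$ schemata, one of which is stage $i$ of $f$). Then for every $i\in[h]$, $$\sum_{\xi\in\Lambda_i,\ \xi\neq \text{stage } i} S(\xi) = -i\delta.$$
   Context: For a positive integer $n$, $[n]=\{1,\dots,n\}$ and $\mathfrak B_\ell$ is the set of binary strings of length $\ell$; $g_j$ denotes the $j$-th bit of $g$. For a $k$-tuple $x=(x_1,\dots,x_k)$ of integers in $[\ell]$ and $g\in\mathfrak B_\ell$, $\Xi_x(g)$ is the string $g_{x_1}g_{x_2}\cdots g_{x_k}$. For a matrix $M$, $M_{i:}$ is its $i$-th row (as a tuple). A schema is a set of the form $\{g\in\mathfrak B_\ell: g_j=c_j \text{ for all } j\in D\}$ for some $D\subseteq[\ell]$ and bits $c_j$; the schema partition with fixed positions $D$ is the set of all $2^{|D|}$ such schemata. A staircase function descriptor is a tuple $(h,o,\delta,\ell,L,V)$ where $h,o,\ell$ are positive integers with $ho\le \ell$, $\delta>0$ is real, $V$ is an $h\times o$ matrix of bits, and $L$ is an $h\times o$ matrix whose $ho$ entries are pairwise distinct integers in $[\ell]$. The staircase function $f$ with this descriptor is the stochastic function on $\mathfrak B_\ell$ computed as follows on input $g$: draw $x\sim\mathcal N(0,1)$ (independently at each evaluation); for $i=1,\dots,h$ in order: if $\Xi_{L_{i:}}(g)=V_{i1}\cdots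 V_{io}$ then set $x\leftarrow x+\delta$, otherwise set $x\leftarrow x-\delta/(2^o-1)$ and stop the loop; return $x$. Step $i$ of $f$ is the schema $\{g\in\mathfrak B_\ell:\Xi_{L_{i:}}(g)=V_{i1}\cdots V_{io}\}$; stage $i$ of $f$ is the schema of all $g$ lying in steps $1,\dots,i$ simultaneously. For a schema $\gamma\subseteq\mathfrak B_\ell$, $F_\gamma$ is the random variable giving the value of $f$ at a string drawn uniformly from $\gamma$. The fitness signal of $\gamma$ is $S(\gamma)=\mathbf E[F_\gamma]-\mathbf E[F_{\mathfrak B_\ell}]$. *)

theory Defs
  imports "HOL-Probability.Probability"
begin

text \<open>Binary strings of length l are bool lists of length l; bit j (1-based) of g is g ! (j-1).\<close>
definition bstrings :: "nat \<Rightarrow> bool list set" where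
  "bstrings l = {g. length g = l}"

definition bit :: "bool list \<Rightarrow> nat \<Rightarrow> bool" where
  "bit g j = g ! (j - 1)"

definition Xi :: "nat list \<Rightarrow> bool list \<Rightarrow> bool list" where
  "Xi x g = map (bit g) x"

definition row :: "nat \<Rightarrow> (nat \<Rightarrow> nat \<Rightarrow> 'a) \<Rightarrow> nat \<Rightarrow> 'a list" where
  "row oc M i = map (M i) [1..<oc+1]"

definition schema :: "nat \<Rightarrow> nat set \<Rightarrow> (nat \<Rightarrow> bool) \<Rightarrow> bool list set" where
  "schema l D c = {g \<in> bstrings l. \<forall>j\<in>D. bit g j = c j}"

definition schema_partition :: "nat \<Rightarrow> nat set \<Rightarrow> bool list set set" where
  "schema_partition l D = {schema l D c | c. True}"

text \<open>Staircase descriptor: (h, oc, delta, l, L, V), matrices as 1-based functions.\<close>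
definition staircase_descriptor ::
  "nat \<Rightarrow> nat \<Rightarrow> real \<Rightarrow> nat \<Rightarrow> (nat \<Rightarrow> nat \<Rightarrow> nat) \<Rightarrow> (nat \<Rightarrow> nat \<Rightarrow> bool) \<Rightarrow> bool" where
  "staircase_descriptor h oc \<delta> l L V \<longleftrightarrow>
     0 < h \<and> 0 < oc \<and> h * oc \<le> l \<and> 0 < \<delta> \<and>
     (\<forall>i\<in>{1..h}. \<forall>j\<in>{1..oc}. L i j \<in> {1..l}) \<and>
     inj_on (\<lambda>(i, j). L i j) ({1..h} \<times> {1..oc})"

text \<open>The loop of the staircase function: n iterations remaining, current step i, current value x.\<close>
primrec stair_loop ::
  "nat \<Rightarrow> real \<Rightarrow> (nat \<Rightarrow> nat \<Rightarrow> nat) \<Rightarrow> (nat \<Rightarrow> nat \<Rightarrow> bool) \<Rightarrow> bool list \<Rightarrow> nat \<Rightarrow> nat \<Rightarrow> real \<Rightarrow> real" where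
  "stair_loop oc \<delta> L V g 0 i x = x"
| "stair_loop oc \<delta> L V g (Suc n) i x =
     (if Xi (row oc L i) g = row oc V i then stair_loop oc \<delta> L V g n (Suc i) (x + \<delta>)
      else x - \<delta> / (2 ^ oc - 1))"

definition staircase_value :: "nat \<Rightarrow> nat \<Rightarrow> real \<Rightarrow> (nat \<Rightarrow> nat \<Rightarrow> nat) \<Rightarrow> (nat \<Rightarrow> nat \<Rightarrow> bool) \<Rightarrow> bool list \<Rightarrow> real measure" where
  "staircase_value h oc \<delta> L V g =
     distr (density lborel std_normal_density) borel (\<lambda>x. stair_loop oc \<delta> L V g h 1 x)"

definition step :: "nat \<Rightarrow> nat \<Rightarrow> (nat \<Rightarrow> nat \<Rightarrow> nat) \<Rightarrow> (nat \<Rightarrow> nat \<Rightarrow> bool) \<Rightarrow> nat \<Rightarrow> bool list set" where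
  "step l oc L V i = {g \<in> bstrings l. Xi (row oc L i) g = row oc V i}"

definition stage :: "nat \<Rightarrow> nat \<Rightarrow> (nat \<Rightarrow> nat \<Rightarrow> nat) \<Rightarrow> (nat \<Rightarrow> nat \<Rightarrow> bool) \<Rightarrow> nat \<Rightarrow> bool list set" where
  "stage l oc L V i = {g \<in> bstrings l. \<forall>k\<in>{1..i}. g \<in> step l oc L V k}"

definition F_dist :: "nat \<Rightarrow> nat \<Rightarrow> real \<Rightarrow> (nat \<Rightarrow> nat \<Rightarrow> nat) \<Rightarrow> (nat \<Rightarrow> nat \<Rightarrow> bool) \<Rightarrow> bool list set \<Rightarrow> real measure" where
  "F_dist h oc \<delta> L V \<gamma> = measure_pmf (pmf_of_set \<gamma>) \<bind> staircase_value h oc \<delta> L V"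

definition mean_F :: "nat \<Rightarrow> nat \<Rightarrow> real \<Rightarrow> (nat \<Rightarrow> nat \<Rightarrow> nat) \<Rightarrow> (nat \<Rightarrow> nat \<Rightarrow> bool) \<Rightarrow> bool list set \<Rightarrow> real" where
  "mean_F h oc \<delta> L V \<gamma> = (\<integral>x. x \<partial>F_dist h oc \<delta> L V \<gamma>)"

definition fitness_signal :: "nat \<Rightarrow> nat \<Rightarrow> real \<Rightarrow> nat \<Rightarrow> (nat \<Rightarrow> nat \<Rightarrow> nat) \<Rightarrow> (nat \<Rightarrow> nat \<Rightarrow> bool) \<Rightarrow> bool list set \<Rightarrow> real" where
  "fitness_signal h oc \<delta> l L V \<gamma> = mean_F h oc \<delta> L V \<gamma> - mean_F h oc \<delta> L V (bstrings l)"

end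

theory Submission
  imports Defs
begin


abbreviation "NN \<equiv> density lborel std_normal_density"

lemma NN_prob: "prob_space NN" by (rule prob_space_normal_density) simp

lemma NN_int: "integrable NN (\<lambda>x. x)"
proof -
  have "integrable lborel (\<lambda>x. std_normal_density x * x)"
    using integrable_std_normal_moment[of 1] by simp
  thus ?thesis by (subst integrable_density) (auto simp: normal_density_nonneg)
qed

lemma NN_int0: "(\<integral>x. x \<partial>NN) = 0"
proof -
  have "(\<integral>x. x \<partial>NN) = (\<integral>x. std_normal_density x * x \<partial>lborel)"
    by (subst integral_density) (auto simp: normal_density_nonneg)
  also have "\<dots> = 0" using integral_std_normal_moment_odd[of 0] by simp
  finally show ?thesis .
qed

lemma NN_int_shift: "integrable NN (\<lambda>x. x + c)"
proof -
  interpret prob_space NN by (rule NN_prob)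
  show ?thesis using NN_int by (intro Bochner_Integration.integrable_add) auto
qed

lemma NN_int_shift_val: "(\<integral>x. x + c \<partial>NN) = c"
proof -
  interpret prob_space NN by (rule NN_prob)
  have "measure NN UNIV = 1" using prob_space by simp
  thus ?thesis using NN_int NN_int0 by (subst Bochner_Integration.integral_add) auto
qed

lemma K_meas: "(\<lambda>g. distr NN borel (\<lambda>x. x + c g)) \<in> measurable (measure_pmf p) (subprob_algebra borel)"
proof -
  have "\<And>g. prob_space (distr NN borel (\<lambda>x. x + c g))"
    by (rule prob_space.prob_space_distr[OF NN_prob]) auto
  thus ?thesis by (auto simp: space_subprob_algebra prob_space_imp_subprob_space)
qed

lemma nn_bind:
  fixes f :: "real \<Rightarrow> real" and c :: "'a \<Rightarrow> real"
  assumes fin: "finite (set_pmf p)" and fm: "f \<in> borel_measurable borel"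
    and nn: "\<And>y. 0 \<le> f y" and int: "\<And>g. integrable NN (\<lambda>x. f (x + c g))"
  shows "(\<integral>\<^sup>+y. ennreal (f y) \<partial>(measure_pmf p \<bind> (\<lambda>g. distr NN borel (\<lambda>x. x + c g))))
     = ennreal (\<Sum>g\<in>set_pmf p. (\<integral>x. f (x + c g) \<partial>NN) * pmf p g)"
proof -
  have "(\<integral>\<^sup>+y. ennreal (f y) \<partial>(measure_pmf p \<bind> (\<lambda>g. distr NN borel (\<lambda>x. x + c g))))
     = (\<integral>\<^sup>+g. \<integral>\<^sup>+y. ennreal (f y) \<partial>distr NN borel (\<lambda>x. x + c g) \<partial>measure_pmf p)"
    by (rule nn_integral_bind[OF _ K_meas]) (use fm in measurable)
  also have "\<dots> = (\<integral>\<^sup>+g. ennreal (\<integral>x. f (x + c g) \<partial>NN) \<partial>measure_pmf p)"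
  proof (rule nn_integral_cong)
    fix g
    have "(\<integral>\<^sup>+y. ennreal (f y) \<partial>distr NN borel (\<lambda>x. x + c g)) = (\<integral>\<^sup>+x. ennreal (f (x + c g)) \<partial>NN)"
      by (subst nn_integral_distr) (use fm in auto)
    also have "\<dots> = ennreal (\<integral>x. f (x + c g) \<partial>NN)"
      by (rule nn_integral_eq_integral[OF int]) (auto simp: nn)
    finally show "(\<integral>\<^sup>+y. ennreal (f y) \<partial>distr NN borel (\<lambda>x. x + c g)) = ennreal (\<integral>x. f (x + c g) \<partial>NN)" .
  qed
  also have "\<dots> = (\<Sum>g\<in>set_pmf p. ennreal (\<integral>x. f (x + c g) \<partial>NN) * pmf p g)"
    by (rule nn_integral_measure_pmf_finite[OF fin]) auto
  also have "\<dots> = ennreal (\<Sum>g\<in>set_pmf p. (\<integral>x. f (x + c g) \<partial>NN) * pmf p g)"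
    by (subst sum_ennreal[symmetric]) (auto simp: ennreal_mult nn intro!: sum.cong mult_nonneg_nonneg integral_nonneg_AE)
  finally show ?thesis .
qed

lemma bind_mean:
  fixes c :: "'a \<Rightarrow> real"
  assumes fin: "finite (set_pmf p)"
  shows "(\<integral>y. y \<partial>(measure_pmf p \<bind> (\<lambda>g. distr NN borel (\<lambda>x. x + c g)))) = (\<Sum>g\<in>set_pmf p. c g * pmf p g)"
proof -
  let ?M = "measure_pmf p \<bind> (\<lambda>g. distr NN borel (\<lambda>x. x + c g))"
  have sM: "sets ?M = sets borel" by (rule sets_bind) auto
  have ip: "integrable NN (\<lambda>x. max (x + c g) 0)" for g
    using NN_int_shift[of "c g"] by (intro integrable_max) auto
  have in': "integrable NN (\<lambda>x. max (- (x + c g)) 0)" for g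
    using NN_int_shift[of "c g"] by (intro integrable_max integrable_minus) auto
  have h1: "has_bochner_integral ?M (\<lambda>y. max y 0) (\<Sum>g\<in>set_pmf p. (\<integral>x. max (x + c g) 0 \<partial>NN) * pmf p g)"
    apply (rule has_bochner_integral_nn_integral)
    apply (simp_all add: measurable_cong_sets[OF sM refl])
    apply (intro sum_nonneg mult_nonneg_nonneg integral_nonneg_AE) apply auto[3]
    apply (rule nn_bind[OF fin, of "\<lambda>y. max y 0", simplified]) using ip by auto
  have h2: "has_bochner_integral ?M (\<lambda>y. max (-y) 0) (\<Sum>g\<in>set_pmf p. (\<integral>x. max (- (x + c g)) 0 \<partial>NN) * pmf p g)"
    apply (rule has_bochner_integral_nn_integral)
    apply (simp_all add: measurable_cong_sets[OF sM refl])
    apply (intro sum_nonneg mult_nonneg_nonneg integral_nonneg_AE) apply auto[3]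
    apply (rule nn_bind[OF fin, of "\<lambda>y. max (-y) 0", simplified]) using in' by auto
  have "has_bochner_integral ?M (\<lambda>y. max y 0 - max (-y) 0)
     ((\<Sum>g\<in>set_pmf p. (\<integral>x. max (x + c g) 0 \<partial>NN) * pmf p g) - (\<Sum>g\<in>set_pmf p. (\<integral>x. max (- (x + c g)) 0 \<partial>NN) * pmf p g))"
    by (rule has_bochner_integral_diff[OF h1 h2])
  moreover have "(\<lambda>y::real. max y 0 - max (-y) 0) = (\<lambda>y. y)" by (auto simp: max_def)
  moreover have "(\<Sum>g\<in>set_pmf p. (\<integral>x. max (x + c g) 0 \<partial>NN) * pmf p g) - (\<Sum>g\<in>set_pmf p. (\<integral>x. max (- (x + c g)) 0 \<partial>NN) * pmf p g)
      = (\<Sum>g\<in>set_pmf p. c g * pmf p g)"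
  proof -
    have "(\<integral>x. max (x + c g) 0 \<partial>NN) - (\<integral>x. max (- (x + c g)) 0 \<partial>NN) = c g" for g
    proof -
      have "(\<integral>x. max (x + c g) 0 \<partial>NN) - (\<integral>x. max (- (x + c g)) 0 \<partial>NN) = (\<integral>x. max (x + c g) 0 - max (- (x + c g)) 0 \<partial>NN)"
        using ip in' by (subst Bochner_Integration.integral_diff) auto
      also have "(\<lambda>x. max (x + c g) 0 - max (- (x + c g)) 0) = (\<lambda>x. x + c g)" by (auto simp: max_def)
      finally show ?thesis using NN_int_shift_val by simp
    qed
    hence "\<And>g. (\<integral>x. max (x + c g) 0 \<partial>NN) * pmf p g - (\<integral>x. max (- (x + c g)) 0 \<partial>NN) * pmf p g = c g * pmf p g"
      by (metis left_diff_distrib)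
    thus ?thesis by (simp only: sum_subtractf[symmetric])
  qed
  ultimately show ?thesis using has_bochner_integral_integral_eq by metis
qed


lemma finite_bstrings: "finite (bstrings l)"
proof -
  have "bstrings l = {xs. set xs \<subseteq> (UNIV::bool set) \<and> length xs = l}" by (auto simp: bstrings_def)
  thus ?thesis using finite_lists_length_eq[of "UNIV::bool set" l] by simp
qed

lemma card_schema:
  assumes D: "D \<subseteq> {1..l}"
  shows "card (schema l D c) = 2 ^ (l - card D)"
proof -
  let ?A = "{1..l} - D"
  let ?phi = "\<lambda>g. restrict (bit g) ?A"
  have fD: "finite D" using D finite_subset by blast
  have inj: "inj_on ?phi (schema l D c)"
  proof (rule inj_onI)
    fix g1 g2 assume g1: "g1 \<in> schema l D c" and g2: "g2 \<in> schema l D c" and eq: "?phi g1 = ?phi g2"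
    show "g1 = g2"
    proof (rule nth_equalityI)
      show "length g1 = length g2" using g1 g2 by (auto simp: schema_def bstrings_def)
    next
      fix k assume k: "k < length g1"
      have l1: "length g1 = l" using g1 by (auto simp: schema_def bstrings_def)
      have "bit g1 (Suc k) = bit g2 (Suc k)"
      proof (cases "Suc k \<in> D")
        case True thus ?thesis using g1 g2 by (auto simp: schema_def)
      next
        case False
        hence "Suc k \<in> ?A" using k l1 by auto
        thus ?thesis using fun_cong[OF eq, of "Suc k"] by simp
      qed
      thus "g1 ! k = g2 ! k" by (simp add: bit_def)
    qed
  qed
  have img: "?phi ` schema l D c = ?A \<rightarrow>\<^sub>E (UNIV::bool set)"
  proof
    show "?phi ` schema l D c \<subseteq> ?A \<rightarrow>\<^sub>E UNIV" by auto
  next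
    show "?A \<rightarrow>\<^sub>E UNIV \<subseteq> ?phi ` schema l D c"
    proof
      fix f assume f: "f \<in> ?A \<rightarrow>\<^sub>E (UNIV::bool set)"
      define g where "g = map (\<lambda>j. if j \<in> D then c j else f j) [1..<l+1]"
      have bg: "bit g j = (if j \<in> D then c j else f j)" if "j \<in> {1..l}" for j
      proof -
        have "j - 1 < l" using that by auto
        thus ?thesis using that by (simp add: g_def bit_def del: upt_Suc)
      qed
      have lg: "length g = l" by (simp add: g_def)
      have gs: "g \<in> schema l D c" using D bg lg unfolding schema_def bstrings_def by force
      have "?phi g = f"
      proof
        fix x show "?phi g x = f x"
        proof (cases "x \<in> ?A")
          case True thus ?thesis using bg[of x] by auto
        next
          case False thus ?thesis using f by (auto simp: PiE_def extensional_def)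
        qed
      qed
      thus "f \<in> ?phi ` schema l D c" using gs by blast
    qed
  qed
  have "card (schema l D c) = card (?A \<rightarrow>\<^sub>E (UNIV::bool set))"
    using card_image[OF inj] img by simp
  also have "\<dots> = 2 ^ card ?A" by (simp add: card_PiE)
  also have "card ?A = l - card D" using D fD by (simp add: card_Diff_subset)
  finally show ?thesis .
qed

lemma Xi_row: "Xi (row oc L k) g = row oc V k \<longleftrightarrow> (\<forall>b\<in>{1..oc}. bit g (L k b) = V k b)"
  by (auto simp: Xi_def row_def map_eq_conv)

lemma stair_loop_shift: "stair_loop oc \<delta> L V g n i x = x + stair_loop oc \<delta> L V g n i 0"
proof (induction n arbitrary: i x)
  case 0 thus ?case by simp
next
  case (Suc n)
  show ?case using Suc.IH[of "Suc i" "x + \<delta>"] Suc.IH[of "Suc i" "\<delta>"] by simp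
qed

lemma stair_match:
  "(\<forall>k\<in>{i..<i+m}. Xi (row oc L k) g = row oc V k) \<Longrightarrow> m \<le> n \<Longrightarrow>
   stair_loop oc \<delta> L V g n i x = stair_loop oc \<delta> L V g (n-m) (i+m) (x + real m * \<delta>)"
proof (induction m arbitrary: i x n)
  case 0 thus ?case by simp
next
  case (Suc m)
  then obtain n' where n: "n = Suc n'" by (cases n) auto
  have mi: "Xi (row oc L i) g = row oc V i" using Suc.prems by auto
  have "stair_loop oc \<delta> L V g n i x = stair_loop oc \<delta> L V g n' (Suc i) (x + \<delta>)" using mi n by simp
  also have "\<dots> = stair_loop oc \<delta> L V g (n'-m) (Suc i+m) (x + \<delta> + real m * \<delta>)"
    using Suc.prems n by (intro Suc.IH) auto
  finally show ?case using n by (simp add: algebra_simps)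
qed

lemma val_stage:
  assumes "g \<in> stage l oc L V j" "j \<le> h"
  shows "stair_loop oc \<delta> L V g h 1 0 = stair_loop oc \<delta> L V g (h-j) (Suc j) (real j * \<delta>)"
proof -
  have "\<forall>k\<in>{1..<1+j}. Xi (row oc L k) g = row oc V k"
    using assms(1) by (auto simp: stage_def step_def)
  from stair_match[OF this assms(2)] show ?thesis by simp
qed

lemma val_top:
  assumes "g \<in> stage l oc L V h"
  shows "stair_loop oc \<delta> L V g h 1 0 = real h * \<delta>"
  using val_stage[OF assms le_refl] by simp

lemma val_fail:
  assumes "g \<in> stage l oc L V j" "j < h" "g \<notin> step l oc L V (Suc j)"
  shows "stair_loop oc \<delta> L V g h 1 0 = real j * \<delta> - \<delta> / (2 ^ oc - 1)"
proof -
  have gb: "g \<in> bstrings l" using assms(1) by (auto simp: stage_def)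
  have nm: "Xi (row oc L (Suc j)) g \<noteq> row oc V (Suc j)" using assms(3) gb by (auto simp: step_def)
  obtain d where d: "h - j = Suc d" using assms(2) by (metis Suc_diff_Suc)
  show ?thesis using val_stage[OF assms(1), of h] assms(2) d nm by simp
qed



definition DD :: "nat \<Rightarrow> (nat \<Rightarrow> nat \<Rightarrow> nat) \<Rightarrow> nat \<Rightarrow> nat set" where
  "DD oc L j = (\<lambda>(a,b). L a b) ` ({1..j} \<times> {1..oc})"

definition cV :: "nat \<Rightarrow> nat \<Rightarrow> (nat \<Rightarrow> nat \<Rightarrow> nat) \<Rightarrow> (nat \<Rightarrow> nat \<Rightarrow> bool) \<Rightarrow> nat \<Rightarrow> bool" where
  "cV h oc L V p = (case inv_into ({1..h} \<times> {1..oc}) (\<lambda>(a,b). L a b) p of (a,b) \<Rightarrow> V a b)"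

lemma DD_sub:
  assumes "staircase_descriptor h oc \<delta> l L V" "j \<le> h"
  shows "DD oc L j \<subseteq> {1..l}" "card (DD oc L j) = oc * j"
proof -
  have inj: "inj_on (\<lambda>(a,b). L a b) ({1..h} \<times> {1..oc})" and rng: "\<forall>i\<in>{1..h}. \<forall>j\<in>{1..oc}. L i j \<in> {1..l}"
    using assms(1) by (auto simp: staircase_descriptor_def)
  have sub: "{1..j} \<times> {1..oc} \<subseteq> {1..h} \<times> {1..oc}" using assms(2) by auto
  show "DD oc L j \<subseteq> {1..l}" using rng sub unfolding DD_def by fastforce
  have "card (DD oc L j) = card ({1..j} \<times> {1..oc})"
    unfolding DD_def by (rule card_image[OF inj_on_subset[OF inj sub]])
  thus "card (DD oc L j) = oc * j" by (simp add: card_cartesian_product)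
qed

lemma stage_schema:
  assumes "staircase_descriptor h oc \<delta> l L V" "j \<le> h"
  shows "stage l oc L V j = schema l (DD oc L j) (cV h oc L V)"
proof -
  have inj: "inj_on (\<lambda>(a,b). L a b) ({1..h} \<times> {1..oc})"
    using assms(1) by (auto simp: staircase_descriptor_def)
  have cv: "cV h oc L V (L a b) = V a b" if "a \<in> {1..j}" "b \<in> {1..oc}" for a b
  proof -
    have "(a,b) \<in> {1..h} \<times> {1..oc}" using that assms(2) by auto
    hence "inv_into ({1..h} \<times> {1..oc}) (\<lambda>(a,b). L a b) ((\<lambda>(a,b). L a b) (a,b)) = (a,b)"
      by (rule inv_into_f_f[OF inj])
    thus ?thesis by (simp add: cV_def)
  qed
  show ?thesis
    unfolding stage_def schema_def step_def Xi_row DD_def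
    using cv by auto
qed

lemma card_stage:
  assumes "staircase_descriptor h oc \<delta> l L V" "j \<le> h"
  shows "card (stage l oc L V j) = 2 ^ (l - oc * j)"
  using stage_schema[OF assms] card_schema[OF DD_sub(1)[OF assms]] DD_sub(2)[OF assms] by simp

lemma finite_stage: "finite (stage l oc L V j)"
  by (rule finite_subset[OF _ finite_bstrings]) (auto simp: stage_def)

lemma stage_sum:
  assumes desc: "staircase_descriptor h oc \<delta> l L V" and "j \<le> h"
  shows "(\<Sum>g\<in>stage l oc L V j. stair_loop oc \<delta> L V g h 1 0) = real j * \<delta> * 2 ^ (l - oc * j)"
  using assms(2)
proof (induction "h - j" arbitrary: j)
  case 0
  hence j: "j = h" by simp
  have "(\<Sum>g\<in>stage l oc L V j. stair_loop oc \<delta> L V g h 1 0) = (\<Sum>g\<in>stage l oc L V j. real h * \<delta>)"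
    using val_top j by (intro sum.cong) auto
  thus ?case using card_stage[OF desc 0(2)] j by simp
next
  case (Suc d)
  hence jh: "j < h" and d: "d = h - Suc j" by auto
  let ?f = "\<lambda>g. stair_loop oc \<delta> L V g h 1 0"
  let ?S = "stage l oc L V"
  have sub: "?S (Suc j) \<subseteq> ?S j" by (auto simp: stage_def)
  have diff: "?S j - ?S (Suc j) = {g \<in> ?S j. g \<notin> step l oc L V (Suc j)}"
    unfolding stage_def by (auto simp: le_Suc_eq) (metis atLeastAtMost_iff le_Suc_eq le_refl Suc_le_mono le0)
  have IH: "sum ?f (?S (Suc j)) = real (Suc j) * \<delta> * 2 ^ (l - oc * Suc j)"
    using Suc.hyps(1)[OF d] jh by simp
  have fd: "sum ?f (?S j - ?S (Suc j)) = real (card (?S j - ?S (Suc j))) * (real j * \<delta> - \<delta> / (2 ^ oc - 1))"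
  proof -
    have "sum ?f {g \<in> ?S j. g \<notin> step l oc L V (Suc j)} = sum (\<lambda>_. real j * \<delta> - \<delta> / (2 ^ oc - 1)) {g \<in> ?S j. g \<notin> step l oc L V (Suc j)}"
    proof (rule sum.cong)
      fix x assume "x \<in> {g \<in> ?S j. g \<notin> step l oc L V (Suc j)}"
      thus "?f x = real j * \<delta> - \<delta> / (2 ^ oc - 1)" using val_fail[OF _ jh, of x l oc L V \<delta>] by simp
    qed simp
    thus ?thesis unfolding diff by simp
  qed
  have cd: "card (?S j - ?S (Suc j)) = 2 ^ (l - oc * j) - 2 ^ (l - oc * Suc j)"
    using card_Diff_subset[OF finite_subset[OF sub finite_stage] sub]
      card_stage[OF desc] jh by simp
  have ohl: "oc * h \<le> l" using desc by (simp add: staircase_descriptor_def mult.commute)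
  have "oc * Suc j \<le> oc * h" using jh by (intro mult_le_mono2) simp
  hence e: "l - oc * j = oc + (l - oc * Suc j)" using ohl by simp
  define E where "E = (2::real) ^ (l - oc * Suc j)"
  define P where "P = (2::real) ^ oc"
  have P2: "P \<ge> 2" using desc by (auto simp: P_def staircase_descriptor_def intro: self_le_power)
  have cdr: "real (card (?S j - ?S (Suc j))) = (P - 1) * E"
  proof -
    have "(2::nat) ^ (l - oc * Suc j) \<le> 2 ^ (l - oc * j)" using e by (simp add: power_add)
    hence "real (card (?S j - ?S (Suc j))) = 2 ^ (l - oc * j) - 2 ^ (l - oc * Suc j)"
      using cd by (simp add: of_nat_diff)
    also have "\<dots> = (P - 1) * E" unfolding P_def E_def e by (simp add: power_add algebra_simps)
    finally show ?thesis .
  qed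
  have "sum ?f (?S j) = sum ?f (?S j - ?S (Suc j)) + sum ?f (?S (Suc j))"
    by (rule sum.subset_diff[OF sub finite_stage])
  also have "\<dots> = (P - 1) * E * (real j * \<delta> - \<delta> / (P - 1)) + real (Suc j) * \<delta> * E"
    using fd cdr IH by (simp add: P_def E_def)
  also have "\<dots> = real j * \<delta> * (P * E)" using P2 by (simp add: field_simps)
  also have "P * E = 2 ^ (l - oc * j)" unfolding P_def E_def e by (simp add: power_add)
  finally show ?case .
qed



lemma mean_eq:
  assumes "finite \<gamma>" "\<gamma> \<noteq> {}"
  shows "mean_F h oc \<delta> L V \<gamma> = (\<Sum>g\<in>\<gamma>. stair_loop oc \<delta> L V g h 1 0) / card \<gamma>"
proof -
  have sv: "staircase_value h oc \<delta> L V = (\<lambda>g. distr NN borel (\<lambda>x. x + stair_loop oc \<delta> L V g h 1 0))"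
  proof
    fix g
    have "(\<lambda>x. stair_loop oc \<delta> L V g h 1 x) = (\<lambda>x. x + stair_loop oc \<delta> L V g h 1 0)"
      by (rule ext, rule stair_loop_shift)
    thus "staircase_value h oc \<delta> L V g = distr NN borel (\<lambda>x. x + stair_loop oc \<delta> L V g h 1 0)"
      unfolding staircase_value_def by (rule arg_cong[where f="distr NN borel"])
  qed
  have "mean_F h oc \<delta> L V \<gamma> = (\<Sum>g\<in>set_pmf (pmf_of_set \<gamma>). stair_loop oc \<delta> L V g h 1 0 * pmf (pmf_of_set \<gamma>) g)"
    unfolding mean_F_def F_dist_def sv by (rule bind_mean) (use assms in simp)
  also have "\<dots> = (\<Sum>g\<in>\<gamma>. stair_loop oc \<delta> L V g h 1 0 / card \<gamma>)"
  proof -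
    have sp: "set_pmf (pmf_of_set \<gamma>) = \<gamma>" using assms by simp
    have pp: "\<And>g. g \<in> \<gamma> \<Longrightarrow> pmf (pmf_of_set \<gamma>) g = 1 / card \<gamma>" using assms by simp
    show ?thesis unfolding sp by (rule sum.cong) (simp_all add: pp)
  qed
  also have "\<dots> = (\<Sum>g\<in>\<gamma>. stair_loop oc \<delta> L V g h 1 0) / card \<gamma>"
    by (simp add: sum_divide_distrib)
  finally show ?thesis .
qed

theorem mainTheorem4:
  fixes h oc l i :: nat and \<delta> :: real
    and L :: "nat \<Rightarrow> nat \<Rightarrow> nat" and V :: "nat \<Rightarrow> nat \<Rightarrow> bool"
  assumes "staircase_descriptor h oc \<delta> l L V"
    and "i \<in> {1..h}"
  shows "(\<Sum>\<xi> \<in> schema_partition l {L a b | a b. a \<in> {1..i} \<and> b \<in> {1..oc}} - {stage l oc L V i}.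
            fitness_signal h oc \<delta> l L V \<xi>) = - real i * \<delta>"
proof -
  note desc = assms(1)
  have ih: "i \<le> h" using assms(2) by simp
  let ?f = "\<lambda>g. stair_loop oc \<delta> L V g h 1 0"
  let ?D = "DD oc L i"
  let ?N = "(2::nat) ^ (l - oc * i)"
  have Deq: "{L a b | a b. a \<in> {1..i} \<and> b \<in> {1..oc}} = ?D" by (auto simp: DD_def) blast
  have B0: "stage l oc L V 0 = bstrings l" by (simp add: stage_def)
  have cB: "card (bstrings l) = 2 ^ l" using card_stage[OF desc, of 0] B0 by simp
  have sB: "sum ?f (bstrings l) = 0" using stage_sum[OF desc, of 0] B0 by simp
  have mB: "mean_F h oc \<delta> L V (bstrings l) = 0"
    using cB sB finite_bstrings by (subst mean_eq) auto
  have fit: "fitness_signal h oc \<delta> l L V \<xi> = mean_F h oc \<delta> L V \<xi>" for \<xi>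
    by (simp add: fitness_signal_def mB)
  let ?P = "schema_partition l ?D"
  have Dsub: "?D \<subseteq> {1..l}" using DD_sub[OF desc ih] by simp
  have cardD: "card ?D = oc * i" using DD_sub[OF desc ih] by simp
  have Pc: "\<xi> \<in> ?P \<Longrightarrow> card \<xi> = ?N \<and> finite \<xi> \<and> \<xi> \<noteq> {}" for \<xi>
  proof -
    assume "\<xi> \<in> ?P"
    then obtain c where xi: "\<xi> = schema l ?D c" by (auto simp: schema_partition_def)
    have fx: "finite \<xi>" unfolding xi by (rule finite_subset[OF _ finite_bstrings]) (auto simp: schema_def)
    have "card \<xi> = ?N" unfolding xi using card_schema[OF Dsub] cardD by simp
    thus ?thesis using fx by auto
  qed
  have finP: "finite ?P"
  proof -
    have "?P \<subseteq> Pow (bstrings l)" unfolding schema_partition_def schema_def by blast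
    thus ?thesis using finite_bstrings finite_subset by blast
  qed
  have UP: "\<Union>?P = bstrings l"
  proof
    show "\<Union>?P \<subseteq> bstrings l" by (auto simp: schema_partition_def schema_def)
    show "bstrings l \<subseteq> \<Union>?P"
    proof
      fix g assume g: "g \<in> bstrings l"
      hence "g \<in> schema l ?D (bit g)" by (simp add: schema_def)
      thus "g \<in> \<Union>?P" by (auto simp: schema_partition_def)
    qed
  qed
  have disj: "\<forall>A\<in>?P. \<forall>B\<in>?P. A \<noteq> B \<longrightarrow> A \<inter> B = {}"
  proof (intro ballI impI)
    fix A B assume A: "A \<in> ?P" and B: "B \<in> ?P" and ne: "A \<noteq> B"
    obtain c1 where c1: "A = schema l ?D c1" using A by (auto simp: schema_partition_def)
    obtain c2 where c2: "B = schema l ?D c2" using B by (auto simp: schema_partition_def)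
    show "A \<inter> B = {}"
    proof (rule ccontr)
      assume "A \<inter> B \<noteq> {}"
      then obtain g where "g \<in> A" "g \<in> B" by blast
      hence "\<forall>p\<in>?D. c1 p = c2 p" using c1 c2 by (auto simp: schema_def)
      hence "schema l ?D c1 = schema l ?D c2" unfolding schema_def by (intro Collect_cong) auto
      hence "A = B" using c1 c2 by simp
      thus False using ne by simp
    qed
  qed
  have sumP: "(\<Sum>\<xi>\<in>?P. fitness_signal h oc \<delta> l L V \<xi>) = 0"
  proof -
    have "(\<Sum>\<xi>\<in>?P. fitness_signal h oc \<delta> l L V \<xi>) = (\<Sum>\<xi>\<in>?P. sum ?f \<xi> / ?N)"
      using Pc by (intro sum.cong) (auto simp: fit mean_eq)
    also have "\<dots> = (\<Sum>\<xi>\<in>?P. sum ?f \<xi>) / ?N" by (simp add: sum_divide_distrib)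
    also have "(\<Sum>\<xi>\<in>?P. sum ?f \<xi>) = sum ?f (\<Union>?P)"
    proof -
      have "\<forall>A\<in>?P. finite A" using Pc by blast
      from sum.Union_disjoint[OF this disj, of ?f] show ?thesis by (simp add: comp_def)
    qed
    also have "\<dots> = 0" using UP sB by simp
    finally show ?thesis by simp
  qed
  have stP: "stage l oc L V i \<in> ?P"
    using stage_schema[OF desc ih] by (auto simp: schema_partition_def)
  have fst: "fitness_signal h oc \<delta> l L V (stage l oc L V i) = real i * \<delta>"
  proof -
    have c: "card (stage l oc L V i) = ?N" using card_stage[OF desc ih] .
    have "fitness_signal h oc \<delta> l L V (stage l oc L V i) = sum ?f (stage l oc L V i) / ?N"
      using Pc[OF stP] c by (simp add: fit mean_eq)
    also have "\<dots> = real i * \<delta>" using stage_sum[OF desc ih] by simp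
    finally show ?thesis .
  qed
  show ?thesis
    unfolding Deq using sum_diff1[OF finP, of "fitness_signal h oc \<delta> l L V" "stage l oc L V i"] stP sumP fst
    by simp
qed


end
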